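(* Let $N\ge1$, $K>0$, $r_i>0$, let $(\mu_{ij})$ be a nonnegative, symmetric, irreducible $N\times N$ matrix, and let $\Psi_1,\dots,\Psi_N:\mathbb{R}^N\to\mathbb{R}$ be locally Lipschitz with $\Psi_i(0)=0$, monotone increasing for the componentwise order, and such that for each $i$ there exist positive $R_i,k_i,c_i$ with $c_i(\sum_jv_j)^{k_i}\le\Psi_i(v)$ for all $v\in[0,\infty)^N$ with $\sum_j|v_j|\ge R_i$. Let $v(t)$ be a solution of the Cauchy problem $$\frac{dv_i}{dt}=v_i\left[r_i-\frac{1}{K}\Psi_i(v)\right]+\sum_{j=1}^N\mu_{ij}(v_j-v_i),\qquad i=1,\dots,N,$$ with nonnegative initial datum $v(0)$. Then there exist two constants $C_0,C_1$ and a vector $v_p$ with all components positive such that $v(t)\le C_0e^{C_1t}v_p$ componentwise for all $t$ in the interval of existence. *)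

theory Defs
  imports "HOL-Analysis.Analysis"
begin

definition irreducible_matrix :: "real^'n^'n \<Rightarrow> bool" where
  "irreducible_matrix m \<longleftrightarrow>
     (\<forall>I :: 'n set. I \<noteq> {} \<and> I \<noteq> UNIV \<longrightarrow> (\<exists>i\<in>I. \<exists>j. j \<notin> I \<and> m $ i $ j \<noteq> 0))"

definition locally_lipschitz :: "('a::metric_space \<Rightarrow> 'b::metric_space) \<Rightarrow> bool" where
  "locally_lipschitz f \<longleftrightarrow> (\<forall>x. \<exists>e>0. \<exists>L. L-lipschitz_on (ball x e) f)"

definition comp_mono :: "(real^'n \<Rightarrow> real) \<Rightarrow> bool" where
  "comp_mono f \<longleftrightarrow> (\<forall>u w. (\<forall>j. u $ j \<le> w $ j) \<longrightarrow> f u \<le> f w)"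

end

theory Submission imports Defs begin

lemma barrier:
  fixes h h' :: "'i::finite \<Rightarrow> real \<Rightarrow> real" and T :: real
  assumes T: "0 \<le> T"
  and der: "\<And>i t. t\<in>{0..T} \<Longrightarrow> (h i has_real_derivative h' i t) (at t within {0..T})"
  and init: "\<And>i. h i 0 < 0"
  and key: "\<And>i t. t\<in>{0<..T} \<Longrightarrow> (\<forall>j. \<forall>s\<in>{0..t}. h j s \<le> 0) \<Longrightarrow> h i t = 0 \<Longrightarrow> h' i t < 0"
  shows "h i0 T < 0"
proof (rule ccontr)
  assume A: "\<not> h i0 T < 0"
  have cont: "continuous_on {0..T} (h i)" for i
    by (rule DERIV_continuous_on[OF der])
  define S where "S = (\<Union>i. {0..T} \<inter> h i -` {0..})"
  have clS: "closed S" unfolding S_def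
    by (intro closed_Union finite_imageI) (auto intro: continuous_closed_preimage[OF cont])
  have TS: "T \<in> S" using A T unfolding S_def by (auto intro!: exI[of _ i0])
  have bdd: "bdd_below S" unfolding S_def by (auto intro!: bdd_belowI[of _ 0])
  define ts where "ts = Inf S"
  have tsS: "ts \<in> S" unfolding ts_def using closed_contains_Inf[OF _ bdd clS] TS by auto
  then obtain i where ts: "ts \<in> {0..T}" "0 \<le> h i ts" unfolding S_def by auto
  have ts0: "ts \<noteq> 0" using ts init[of i] by auto
  hence tspos: "0 < ts" using ts by auto
  have below: "h j s < 0" if "s \<in> {0..<ts}" for j s
  proof (rule ccontr)
    assume "\<not> h j s < 0"
    hence "s \<in> S" using that ts unfolding S_def by (auto intro!: exI[of _ j])
    hence "ts \<le> s" unfolding ts_def using bdd by (simp add: cInf_lower)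
    thus False using that by auto
  qed
  have atts: "h j ts \<le> 0" for j
  proof -
    have c: "continuous_on {0..ts} (h j)" using cont by (rule continuous_on_subset) (use ts in auto)
    have "(h j \<longlongrightarrow> h j ts) (at ts within {0..ts})"
      using c tspos unfolding continuous_on_def by auto
    hence L: "(h j \<longlongrightarrow> h j ts) (at_left ts)" using at_within_Icc_at_left[OF tspos] by simp
    show ?thesis
    proof (rule tendsto_upperbound[OF L])
      show "\<forall>\<^sub>F x in at_left ts. h j x \<le> 0"
        using eventually_at_left_real[OF tspos] by eventually_elim (simp add: below less_imp_le)
    qed simp
  qed
  have hz: "h i ts = 0" using atts[of i] ts by auto
  have "\<forall>j. \<forall>s\<in>{0..ts}. h j s \<le> 0"
    using below atts by (metis atLeastAtMost_iff atLeastLessThan_iff less_eq_real_def)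
  hence neg: "h' i ts < 0" using key[of ts i] ts tspos hz by auto
  obtain d where d: "d > 0" "\<And>k. k > 0 \<Longrightarrow> ts - k \<in> {0..T} \<Longrightarrow> k < d \<Longrightarrow> h i ts < h i (ts - k)"
    using has_real_derivative_neg_dec_left[OF der[OF ts(1)] neg] by blast
  define k where "k = min d ts / 2"
  have "h i ts < h i (ts - k)" using d ts tspos unfolding k_def by (intro d(2)) auto
  moreover have "h i (ts - k) < 0" using d tspos unfolding k_def by (intro below) auto
  ultimately show False using hz by simp
qed

lemma vec_deriv_comp:
  assumes "(v has_vector_derivative V) F"
  shows "((\<lambda>t. v t $ i) has_real_derivative V $ i) F"
proof -
  have "(v has_derivative (\<lambda>h. h *\<^sub>R V)) F" using assms by (simp add: has_vector_derivative_def)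
  from bounded_linear.has_derivative[OF bounded_linear_vec_nth this, of i]
  show ?thesis by (simp add: has_field_derivative_def mult_commute_abs)
qed

theorem lemma2p3:
  fixes K :: real and r :: "real^'n" and \<mu> :: "real^'n^'n"
    and \<Psi> :: "'n \<Rightarrow> real^'n \<Rightarrow> real"
    and v :: "real \<Rightarrow> real^'n" and J :: "real set"
  assumes K_pos: "K > 0"
    and r_pos: "\<forall>i. r $ i > 0"
    and mu_nonneg: "\<forall>i j. \<mu> $ i $ j \<ge> 0"
    and mu_sym: "\<forall>i j. \<mu> $ i $ j = \<mu> $ j $ i"
    and mu_irred: "irreducible_matrix \<mu>"
    and Psi_lip: "\<forall>i. locally_lipschitz (\<Psi> i)"
    and Psi_zero: "\<forall>i. \<Psi> i 0 = 0"
    and Psi_mono: "\<forall>i. comp_mono (\<Psi> i)"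
    and Psi_growth: "\<forall>i. \<exists>R k c. R > 0 \<and> k > 0 \<and> c > 0 \<and>
        (\<forall>w. (\<forall>j. w $ j \<ge> 0) \<and> (\<Sum>j\<in>UNIV. \<bar>w $ j\<bar>) \<ge> R
              \<longrightarrow> c * (\<Sum>j\<in>UNIV. w $ j) powr k \<le> \<Psi> i w)"
    and J_interval: "is_interval J" and J_0: "0 \<in> J" and J_nonneg: "J \<subseteq> {0..}"
    and ode: "\<forall>t\<in>J. (v has_vector_derivative
        (\<chi> i. v t $ i * (r $ i - \<Psi> i (v t) / K)
               + (\<Sum>j\<in>UNIV. \<mu> $ i $ j * (v t $ j - v t $ i)))) (at t within J)"
    and init_nonneg: "\<forall>i. v 0 $ i \<ge> 0"
  shows "\<exists>C0 C1 (vp :: real^'n). (\<forall>i. vp $ i > 0) \<and>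
           (\<forall>t\<in>J. \<forall>i. v t $ i \<le> C0 * exp (C1 * t) * vp $ i)"
proof -
  define F where "F i t = v t $ i * (r $ i - \<Psi> i (v t) / K) + (\<Sum>j\<in>UNIV. \<mu> $ i $ j * (v t $ j - v t $ i))" for i t
  have derJ: "((\<lambda>t. v t $ i) has_real_derivative F i t) (at t within J)" if "t \<in> J" for i t
    using vec_deriv_comp[OF ode[rule_format, OF that], of i] unfolding F_def by simp
  have sub: "{0..T} \<subseteq> J" if "T \<in> J" for T
    using J_interval[unfolded is_interval_1, rule_format, OF J_0 that] by auto
  have der: "((\<lambda>t. v t $ i) has_real_derivative F i t) (at t within {0..T})" if "T \<in> J" "t \<in> {0..T}" for i t T
    using DERIV_subset[OF derJ sub[OF that(1)]] sub[OF that(1)] that(2) by auto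
  have "\<forall>i. \<exists>e L. e > 0 \<and> L-lipschitz_on (ball 0 e) (\<Psi> i)"
    using Psi_lip unfolding locally_lipschitz_def by blast
  then obtain e L where eL: "\<And>i. e i > 0" "\<And>i. (L i)-lipschitz_on (ball 0 (e i)) (\<Psi> i)"
    by metis
  define E where "E = Min (range e)"
  define Lt where "Lt = (\<Sum>i\<in>UNIV. \<bar>L i\<bar>)"
  have Epos: "E > 0" unfolding E_def using eL(1) by auto
  have Lt0: "Lt \<ge> 0" unfolding Lt_def by (simp add: sum_nonneg)
  have lipb: "\<bar>\<Psi> i x\<bar> \<le> Lt * norm x" if "norm x < E" for i x
  proof -
    have "E \<le> e i" unfolding E_def by simp
    hence "x \<in> ball 0 (e i)" using that by simp
    from lipschitz_onD[OF eL(2) this, of 0] have "\<bar>\<Psi> i x\<bar> \<le> L i * norm x"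
      using Psi_zero eL(1)[of i] by (simp add: dist_norm)
    also have "\<dots> \<le> \<bar>L i\<bar> * norm x" by (intro mult_right_mono) auto
    also have "\<dots> \<le> Lt * norm x" unfolding Lt_def
      by (intro mult_right_mono member_le_sum) auto
    finally show ?thesis .
  qed
  define one :: "real^'n" where "one = (\<chi> j. 1)"
  define c1 where "c1 = norm one"
  have c1pos: "c1 > 0"
  proof -
    have "one $ undefined \<noteq> 0 $ undefined" unfolding one_def by simp
    hence "one \<noteq> 0" by metis
    thus ?thesis unfolding c1_def by simp
  qed
  define R where "R = (\<Sum>i\<in>UNIV. r $ i)"
  have rR: "r $ i \<le> R" for i unfolding R_def
    using r_pos by (intro member_le_sum) (auto intro: less_imp_le)
  have R0: "R \<ge> 0" using rR[of undefined] r_pos by (metis less_imp_le order_trans)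
  define lam where "lam = R + Lt * c1 / K + 1"
  define \<delta> where "\<delta> = min 1 (E / (2 * c1))"
  have dpos: "\<delta> > 0" unfolding \<delta>_def using Epos c1pos by auto
  have pos_eps: "v T $ i0 > - (\<epsilon> * exp (lam * T))"
    if T: "T \<in> J" and eps: "\<epsilon> > 0" "\<epsilon> * exp (lam * T) \<le> \<delta>" for T \<epsilon> i0
  proof -
    have T0: "0 \<le> T" using T J_nonneg by auto
    have "- (\<epsilon> * exp (lam * T)) - v T $ i0 < 0"
    proof (rule barrier[where h = "\<lambda>i t. - (\<epsilon> * exp (lam * t)) - v t $ i"
             and h' = "\<lambda>i t. - (\<epsilon> * (exp (lam * t) * lam)) - F i t", OF T0])
      show "((\<lambda>t. - (\<epsilon> * exp (lam * t)) - v t $ i) has_real_derivative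
             - (\<epsilon> * (exp (lam * t) * lam)) - F i t) (at t within {0..T})" if "t \<in> {0..T}" for i t
        by (auto intro!: derivative_eq_intros der[OF T that])
      show "- (\<epsilon> * exp (lam * 0)) - v 0 $ i < 0" for i using init_nonneg[rule_format, of i] eps by simp
      fix i t
      assume t: "t \<in> {0<..T}" and all: "\<forall>j. \<forall>s\<in>{0..t}. - (\<epsilon> * exp (lam * s)) - v s $ j \<le> 0"
        and eq: "- (\<epsilon> * exp (lam * t)) - v t $ i = 0"
      define m where "m = - (\<epsilon> * exp (lam * t))"
      have mneg: "m < 0" unfolding m_def using eps by simp
      have "exp (lam * t) \<le> exp (lam * T)"
      proof -
        have "lam \<ge> 0" unfolding lam_def using Lt0 c1pos K_pos R0
          by (intro add_nonneg_nonneg divide_nonneg_pos mult_nonneg_nonneg) auto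
        hence "lam * t \<le> lam * T" using t by (intro mult_left_mono) auto
        thus ?thesis by simp
      qed
      hence mabs: "- m \<le> \<delta>" unfolding m_def using eps by (smt (verit) mult_left_mono)
      have m1: "- m \<le> 1" and mE: "- m * c1 \<le> E / 2"
        using mabs c1pos unfolding \<delta>_def by (auto simp: field_simps)
      have vj: "v t $ j \<ge> m" for j using all t unfolding m_def by force
      have vi: "v t $ i = m" using eq unfolding m_def by simp
      have nm: "norm (m *\<^sub>R one) = - m * c1" using mneg by (simp add: c1_def)
      have P: "\<Psi> i (m *\<^sub>R one) \<ge> Lt * c1 * m"
        using lipb[of "m *\<^sub>R one" i] nm mE Epos by (auto simp: abs_le_iff algebra_simps)
      have mono: "\<Psi> i (v t) \<ge> \<Psi> i (m *\<^sub>R one)"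
      proof -
        have "\<forall>j. (m *\<^sub>R one) $ j \<le> v t $ j" using vj by (simp add: one_def)
        thus ?thesis using Psi_mono unfolding comp_mono_def by blast
      qed
      have s1: "(\<Sum>j\<in>UNIV. \<mu> $ i $ j * (v t $ j - v t $ i)) \<ge> 0"
        using vj vi mu_nonneg by (intro sum_nonneg) auto
      have s2: "- m * \<Psi> i (v t) \<ge> - m * (Lt * c1 * m)"
        using P mono mneg by (intro mult_left_mono) auto
      have s3: "- m * (Lt * c1 * m) \<ge> Lt * c1 * m"
      proof -
        have "(-m) * (-m) \<le> 1 * (-m)" using m1 mneg by (intro mult_right_mono) auto
        hence "m * m \<le> - m" by simp
        hence "Lt * c1 * (m * m) \<le> Lt * c1 * (- m)" using Lt0 c1pos by (intro mult_left_mono) auto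
        thus ?thesis by (simp add: algebra_simps)
      qed
      have "F i t \<ge> m * r $ i + (- m * \<Psi> i (v t)) / K"
        using s1 vi unfolding F_def by (simp add: algebra_simps)
      moreover have "(- m * \<Psi> i (v t)) / K \<ge> Lt * c1 * m / K"
        using s2 s3 K_pos by (intro divide_right_mono) auto
      moreover have "m * r $ i + Lt * c1 * m / K > lam * m"
      proof -
        have "r $ i + Lt * c1 / K < lam" using rR[of i] unfolding lam_def by simp
        hence "(r $ i + Lt * c1 / K) * m > lam * m" using mneg by (intro mult_strict_right_mono_neg)
        thus ?thesis by (simp add: algebra_simps)
      qed
      ultimately have "F i t > lam * m" by linarith
      thus "- (\<epsilon> * (exp (lam * t) * lam)) - F i t < 0" unfolding m_def by (simp add: algebra_simps)
    qed
    thus ?thesis by simp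
  qed
  have vpos: "v T $ i \<ge> 0" if T: "T \<in> J" for T i
  proof (rule field_le_epsilon)
    fix x :: real assume x: "x > 0"
    define \<epsilon> where "\<epsilon> = min x \<delta> / exp (lam * T)"
    have "\<epsilon> > 0" unfolding \<epsilon>_def using x dpos by simp
    moreover have ee: "\<epsilon> * exp (lam * T) = min x \<delta>" unfolding \<epsilon>_def by simp
    ultimately have "v T $ i > - min x \<delta>" using pos_eps[OF T, of \<epsilon> i] by simp
    thus "0 \<le> v T $ i + x" by linarith
  qed
  define B where "B = (\<Sum>i\<in>UNIV. \<bar>v 0 $ i\<bar>) + 1"
  define lam2 where "lam2 = R + 1"
  have upper: "v T $ i0 < B * exp (lam2 * T)" if T: "T \<in> J" for T i0
  proof -
    have T0: "0 \<le> T" using T J_nonneg by auto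
    have "v T $ i0 - B * exp (lam2 * T) < 0"
    proof (rule barrier[where h = "\<lambda>i t. v t $ i - B * exp (lam2 * t)"
             and h' = "\<lambda>i t. F i t - B * (exp (lam2 * t) * lam2)", OF T0])
      show "((\<lambda>t. v t $ i - B * exp (lam2 * t)) has_real_derivative
             F i t - B * (exp (lam2 * t) * lam2)) (at t within {0..T})" if "t \<in> {0..T}" for i t
        by (auto intro!: derivative_eq_intros der[OF T that])
      show "v 0 $ i - B * exp (lam2 * 0) < 0" for i
      proof -
        have "v 0 $ i \<le> (\<Sum>i\<in>UNIV. \<bar>v 0 $ i\<bar>)"
          by (rule order_trans[OF abs_ge_self], rule member_le_sum[where f="\<lambda>i. \<bar>v 0 $ i\<bar>"]) auto
        thus ?thesis unfolding B_def by simp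
      qed
      fix i t
      assume t: "t \<in> {0<..T}" and all: "\<forall>j. \<forall>s\<in>{0..t}. v s $ j - B * exp (lam2 * s) \<le> 0"
        and eq: "v t $ i - B * exp (lam2 * t) = 0"
      define b where "b = B * exp (lam2 * t)"
      have Bpos: "B > 0" unfolding B_def by (simp add: add_nonneg_pos sum_nonneg)
      have bpos: "b > 0" unfolding b_def using Bpos by simp
      have tJ: "t \<in> J" using sub[OF T] t by auto
      have vj: "v t $ j \<le> b" for j using all t unfolding b_def by force
      have vi: "v t $ i = b" using eq unfolding b_def by simp
      have Pn: "\<Psi> i (v t) \<ge> 0"
        using Psi_mono Psi_zero vpos[OF tJ] unfolding comp_mono_def by (metis zero_index)
      have s1: "(\<Sum>j\<in>UNIV. \<mu> $ i $ j * (v t $ j - v t $ i)) \<le> 0"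
        using vj vi mu_nonneg by (intro sum_nonpos mult_nonneg_nonpos) auto
      have s2: "b * \<Psi> i (v t) / K \<ge> 0" using Pn bpos K_pos by simp
      have "F i t \<le> b * r $ i"
        using s1 s2 vi unfolding F_def by (simp add: algebra_simps)
      also have "\<dots> < b * lam2" using bpos rR[of i] unfolding lam2_def by simp
      finally show "F i t - B * (exp (lam2 * t) * lam2) < 0" unfolding b_def by (simp add: algebra_simps)
    qed
    thus ?thesis by simp
  qed
  define one' :: "real^'n" where "one' = (\<chi> j. 1)"
  have "(\<forall>i. one' $ i > 0) \<and> (\<forall>t\<in>J. \<forall>i. v t $ i \<le> B * exp (lam2 * t) * one' $ i)"
    using upper by (simp add: one'_def less_imp_le)
  thus ?thesis by blast
qed

end
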